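(* Let $P_1,\ldots,P_n$ be mutually orthogonal self-adjoint projections on a real or complex Hilbert space $\mathcal{H}$, all of the same nonzero rank $k$, where $k$ may be finite or infinite. Let $r_1,\ldots,r_n\ge0$ be real numbers with $r=\sum_{i=1}^n r_i$, and set $A=r_1P_1+\cdots+r_nP_n$. If $r$ is an integer and $r\ge n$, then there exist self-adjoint projections $Q_1,\ldots,Q_r$, each of rank $k$, such that $A=Q_1+\cdots+Q_r$. *)

theory Defs
  imports "HOL-Analysis.Analysis" "HOL-Library.Equipollence"
begin

text \<open>A Hilbert space is a type of class real_inner and complete_space.
  The scalar field is encoded by an operator J: J = id means the real
  Hilbert space itself; a complex structure J (real-linear, J o J = -id,
  orthogonal) turns the real Hilbert space into a complex Hilbert space
  with complex inner product  inner x y + i * inner x (J y)  and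
  scalar multiplication (a + i b) x = a x + b J x.\<close>

definition complex_structure :: "('a::real_inner \<Rightarrow> 'a) \<Rightarrow> bool" where
  "complex_structure J \<longleftrightarrow> bounded_linear J \<and> (\<forall>x. J (J x) = - x)
     \<and> (\<forall>x y. inner (J x) (J y) = inner x y)"

definition scalar_structure :: "('a::real_inner \<Rightarrow> 'a) \<Rightarrow> bool" where
  "scalar_structure J \<longleftrightarrow> J = id \<or> complex_structure J"

definition sa_projection :: "('a::real_inner \<Rightarrow> 'a) \<Rightarrow> ('a \<Rightarrow> 'a) \<Rightarrow> bool" where
  "sa_projection J P \<longleftrightarrow> bounded_linear P \<and> (\<forall>x. P (P x) = P x)
     \<and> (\<forall>x y. inner (P x) y = inner x (P y)) \<and> (\<forall>x. P (J x) = J (P x))"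

definition orthonormal_basis_of :: "('a::real_inner \<Rightarrow> 'a) \<Rightarrow> 'a set \<Rightarrow> 'a set \<Rightarrow> bool" where
  "orthonormal_basis_of J B V \<longleftrightarrow> B \<subseteq> V \<and> (\<forall>x\<in>B. norm x = 1)
     \<and> (\<forall>x\<in>B. \<forall>y\<in>B. x \<noteq> y \<longrightarrow> inner x y = 0 \<and> inner x (J y) = 0)
     \<and> closure (span (B \<union> J ` B)) = V"

definition same_rank :: "('a::real_inner \<Rightarrow> 'a) \<Rightarrow> ('a \<Rightarrow> 'a) \<Rightarrow> ('a \<Rightarrow> 'a) \<Rightarrow> bool" where
  "same_rank J P Q \<longleftrightarrow> (\<exists>B C. orthonormal_basis_of J B (range P)
     \<and> orthonormal_basis_of J C (range Q) \<and> B \<approx> C)"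

end

theory Submission
  imports Defs
begin


lemma ss_cases: "scalar_structure J \<Longrightarrow> J = id \<or> complex_structure J"
  by (simp add: scalar_structure_def)

lemma ss_bl: "scalar_structure J \<Longrightarrow> bounded_linear J"
  by (auto simp: scalar_structure_def complex_structure_def bounded_linear_ident[unfolded id_def[symmetric]])

lemma ss_inner: "scalar_structure J \<Longrightarrow> inner (J x) (J y) = inner x y"
  by (auto simp: scalar_structure_def complex_structure_def)

lemma cs_JJ: "complex_structure J \<Longrightarrow> J (J x) = - x"
  by (simp add: complex_structure_def)

lemma cs_inner_self: "complex_structure J \<Longrightarrow> inner x (J x) = 0"
proof -
  assume c: "complex_structure J"
  have "inner x (J x) = inner (J x) (J (J x))" using c unfolding complex_structure_def by metis
  also have "\<dots> = - inner x (J x)" using cs_JJ[OF c, of x] by (simp add: inner_commute)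
  finally show ?thesis by simp
qed

lemma sap_bl: "sa_projection J P \<Longrightarrow> bounded_linear P"
  by (simp add: sa_projection_def)
lemma sap_idem: "sa_projection J P \<Longrightarrow> P (P x) = P x"
  by (simp add: sa_projection_def)
lemma sap_sa: "sa_projection J P \<Longrightarrow> inner (P x) y = inner x (P y)"
  by (simp add: sa_projection_def)
lemma sap_J: "sa_projection J P \<Longrightarrow> P (J x) = J (P x)"
  by (simp add: sa_projection_def)

lemma sap_range: "sa_projection J P \<Longrightarrow> x \<in> range P \<longleftrightarrow> P x = x"
  by (metis rangeE rangeI sap_idem)

lemma sap_range_closed: "sa_projection J P \<Longrightarrow> closed (range P)"
proof -
  assume a: "sa_projection J P"
  have "range P = {x. P x = x}" using sap_range[OF a] by auto
  moreover have "closed {x. P x = x}"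
    by (rule closed_Collect_eq) (auto intro: linear_continuous_on continuous_on_id sap_bl[OF a])
  ultimately show ?thesis by simp
qed

lemma sap_norm: "sa_projection J P \<Longrightarrow> norm (P x) \<le> norm x"
proof -
  assume a: "sa_projection J P"
  have "norm (P x) ^ 2 = inner (P x) (P x)" by (simp add: power2_norm_eq_inner)
  also have "\<dots> = inner x (P x)" using sap_sa[OF a, of x "P x"] sap_idem[OF a] by simp
  also have "\<dots> \<le> norm x * norm (P x)" by (rule Cauchy_Schwarz_ineq2[THEN order_trans[OF abs_ge_self]])
  finally have "norm (P x) * norm (P x) \<le> norm x * norm (P x)" by (simp add: power2_eq_square)
  then show ?thesis
    by (metis mult_le_cancel_right norm_ge_zero not_le order_less_le)
qed

lemma sap_subspace: "sa_projection J P \<Longrightarrow> subspace (range P)"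
  by (metis sap_bl bounded_linear.linear subspace_UNIV linear_subspace_image)

lemma eq_on_range:
  fixes h k :: "'a::real_normed_vector \<Rightarrow> 'b::metric_space"
  assumes "continuous_on UNIV h" "continuous_on UNIV k" "\<And>x. x \<in> X \<Longrightarrow> h x = k x"
    "closure X = range P" "\<And>x. h (P x) = h x" "\<And>x. k (P x) = k x"
  shows "h x = k x"
proof -
  have "closed {x. h x = k x}" by (rule closed_Collect_eq) (use assms in auto)
  then have "closure X \<subseteq> {x. h x = k x}" using assms(3) by (intro closure_minimal) auto
  then have "h (P x) = k (P x)" using assms(4) by auto
  then show ?thesis using assms(5,6) by simp
qed

lemma onb_inner:
  assumes "orthonormal_basis_of J B V" "b \<in> B" "b' \<in> B"
  shows "inner b b' = (if b = b' then 1 else 0)"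
  using assms by (auto simp: orthonormal_basis_of_def norm_eq_1)

lemma onb_innerJ:
  assumes "scalar_structure J" "orthonormal_basis_of J B V" "b \<in> B" "b' \<in> B"
  shows "inner b (J b') = (if b = b' \<and> J = id then 1 else 0)"
proof (cases "b = b'")
  case False then show ?thesis using assms by (auto simp: orthonormal_basis_of_def)
next
  case True
  have n: "norm b = 1" using assms by (auto simp: orthonormal_basis_of_def)
  show ?thesis
  proof (cases "J = id")
    case True
    then show ?thesis using n \<open>b = b'\<close> by (simp add: norm_eq_1)
  next
    case False
    then have c: "complex_structure J" using assms(1) ss_cases by blast
    then show ?thesis using False True cs_inner_self[OF c] by simp
  qed
qed

lemma cs_notin:
  assumes "complex_structure J" "orthonormal_basis_of J B V" "b \<in> B"
  shows "J b \<notin> B"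
proof
  assume jb: "J b \<in> B"
  have s: "scalar_structure J" using assms(1) by (simp add: scalar_structure_def)
  have "inner (J b) (J b) = 1" using assms(2,3) ss_inner[OF s] by (auto simp: orthonormal_basis_of_def norm_eq_1)
  moreover have "J \<noteq> id"
  proof
    assume "J = id"
    then have "b = - b" using cs_JJ[OF assms(1), of b] by simp
    then have "b = 0" by (metis add_cancel_right_left eq_neg_iff_add_eq_0 scaleR_2 scaleR_eq_0_iff zero_neq_numeral)
    then show False using assms(2,3) by (auto simp: orthonormal_basis_of_def)
  qed
  ultimately show False using onb_innerJ[OF s assms(2) jb assms(3)] by (auto split: if_splits)
qed



lemma linear_inner_comp: "linear L \<Longrightarrow> linear (\<lambda>x. inner (L x) c)"
  unfolding linear_iff using linear_add[of L] linear_scale[of L] by (simp add: inner_add_left)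

lemma linear_inner_comp2: "linear L \<Longrightarrow> linear (\<lambda>x. inner c (L x))"
  unfolding linear_iff using linear_add[of L] linear_scale[of L] by (simp add: inner_add_right)

lemma mk_iso:
  fixes J :: "'a::{real_inner, complete_space} \<Rightarrow> 'a"
  assumes s: "scalar_structure J" and P: "sa_projection J P" and R: "sa_projection J R"
    and oB: "orthonormal_basis_of J B (range P)" and oC: "orthonormal_basis_of J C (range R)"
    and f: "bij_betw f B C"
  shows "\<exists>T. bounded_linear T \<and> (\<forall>x. T (J x) = J (T x)) \<and> (\<forall>x. T (P x) = T x)
     \<and> (\<forall>x. R (T x) = T x) \<and> (\<forall>x y. inner (T x) (T y) = inner (P x) (P y)) \<and> (\<forall>b\<in>B. T b = f b)"
proof -
  define E where "E = B \<union> J ` B"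
  have fB: "\<And>b. b \<in> B \<Longrightarrow> f b \<in> C" using f by (auto simp: bij_betw_def)
  have finj: "\<And>b b'. b \<in> B \<Longrightarrow> b' \<in> B \<Longrightarrow> f b = f b' \<longleftrightarrow> b = b'"
    using f by (auto simp: bij_betw_def inj_on_def)
  have Jbl: "bounded_linear J" by (rule ss_bl[OF s])
  then have Jl: "linear J" by (rule bounded_linear.linear)
  have i1: "inner (f b) (f b') = inner b b'" if "b \<in> B" "b' \<in> B" for b b'
    using onb_inner[OF oB that] onb_inner[OF oC fB[OF that(1)] fB[OF that(2)]] finj[OF that] by simp
  have i2: "inner (f b) (J (f b')) = inner b (J b')" if "b \<in> B" "b' \<in> B" for b b'
    using onb_innerJ[OF s oB that] onb_innerJ[OF s oC fB[OF that(1)] fB[OF that(2)]] finj[OF that] by simp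
  have i3: "inner (J (f b)) (f b') = inner (J b) b'" if "b \<in> B" "b' \<in> B" for b b'
    using i2[OF that(2,1)] by (simp add: inner_commute)
  have i4: "inner (J (f b)) (J (f b')) = inner (J b) (J b')" if "b \<in> B" "b' \<in> B" for b b'
    using i1[OF that] ss_inner[OF s] by simp
  have normE: "norm e = 1" if "e \<in> E" for e
    using that oB ss_inner[OF s] by (auto simp: E_def orthonormal_basis_of_def norm_eq_sqrt_inner)
  have orthE: "inner x y = 0" if "x \<in> E" "y \<in> E" "x \<noteq> y" for x y
  proof -
    consider (a) b b' where "b \<in> B" "b' \<in> B" "x = b" "y = b'"
      | (b) b b' where "b \<in> B" "b' \<in> B" "x = b" "y = J b'"
      | (c) b b' where "b \<in> B" "b' \<in> B" "x = J b" "y = b'"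
      | (d) b b' where "b \<in> B" "b' \<in> B" "x = J b" "y = J b'"
      using \<open>x \<in> E\<close> \<open>y \<in> E\<close> unfolding E_def by blast
    then show ?thesis
    proof cases
      case a then show ?thesis using onb_inner[OF oB] that by auto
    next
      case b then show ?thesis using onb_innerJ[OF s oB] that by auto
    next
      case c then show ?thesis using onb_innerJ[OF s oB, of b' b] that by (auto simp: inner_commute)
    next
      case d then show ?thesis using onb_inner[OF oB] ss_inner[OF s] that by auto
    qed
  qed
  have indE: "independent E"
    by (rule pairwise_orthogonal_independent)
       (use orthE normE in \<open>auto simp: pairwise_def orthogonal_def\<close>, metis norm_zero zero_neq_one)
  define g where "g e = (if e \<in> B then f e else J (f (- J e)))" for e
  have gJ: "g (J b) = J (f b)" if "b \<in> B" for b
  proof (cases "J = id")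
    case True then show ?thesis using that by (simp add: g_def)
  next
    case False
    then have c: "complex_structure J" using s ss_cases by blast
    show ?thesis using cs_notin[OF c oB that] cs_JJ[OF c, of b] by (simp add: g_def)
  qed
  obtain L where L: "linear L" and LE: "\<And>x. x \<in> E \<Longrightarrow> L x = g x"
    using linear_independent_extend[OF indE, of g] by blast
  have Lb: "L b = f b" if "b \<in> B" for b using that LE by (auto simp: E_def g_def)
  have LJb: "L (J b) = J (f b)" if "b \<in> B" for b using that LE gJ by (auto simp: E_def)
  have isoE: "inner (L x) (L y) = inner x y" if "x \<in> E" "y \<in> E" for x y
    using that i1 i2 i3 i4 Lb LJb by (auto simp: E_def)
  have isoS1: "inner (L x) (L y) = inner x y" if "x \<in> span E" "y \<in> E" for x y
    by (rule linear_eq_on_span[where B=E and f="\<lambda>x. inner (L x) (L y)" and g="\<lambda>x. inner x y"])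
       (use that isoE linear_inner_comp[OF L] linear_inner_comp[OF linear_id[unfolded id_def]] in auto)
  have isoS: "inner (L x) (L y) = inner x y" if "x \<in> span E" "y \<in> span E" for x y
    by (rule linear_eq_on_span[where B=E and f="\<lambda>y. inner (L x) (L y)" and g="\<lambda>y. inner x y"])
       (use that isoS1 linear_inner_comp2[OF L] linear_inner_comp2[OF linear_id[unfolded id_def]] in auto)
  have normS: "norm (L x) = norm x" if "x \<in> span E" for x
    using isoS[OF that that] by (simp add: norm_eq_sqrt_inner)
  have JE: "J ` E \<subseteq> span E"
  proof
    fix y assume "y \<in> J ` E"
    then obtain e where e: "e \<in> E" "y = J e" by auto
    show "y \<in> span E"
    proof (cases "J = id")
      case True then show ?thesis using e by (simp add: span_base)
    next
      case False
      then have c: "complex_structure J" using s ss_cases by blast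
      from e(1) consider "e \<in> B" | b where "b \<in> B" "e = J b" by (auto simp: E_def)
      then show ?thesis
      proof cases
        case 1 then show ?thesis using e by (auto simp: E_def span_base)
      next
        case 2 then show ?thesis using e cs_JJ[OF c, of b]
          by (simp add: E_def span_base span_neg)
      qed
    qed
  qed
  have JS: "J x \<in> span E" if "x \<in> span E" for x
  proof -
    have "J ` span E = span (J ` E)" by (simp add: span_linear_image[OF Jl])
    also have "\<dots> \<subseteq> span E" using JE by (metis span_mono span_span)
    finally show ?thesis using that by auto
  qed
  have LJ: "L (J x) = J (L x)" if "x \<in> span E" for x
  proof (rule linear_eq_on_span[where B=E and f="\<lambda>x. L (J x)" and g="\<lambda>x. J (L x)"])
    show "linear (\<lambda>x. L (J x))" using linear_compose[OF Jl L] by (simp add: o_def)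
    show "linear (\<lambda>x. J (L x))" using linear_compose[OF L Jl] by (simp add: o_def)
    show "x \<in> span E" by fact
    fix e assume e: "e \<in> E"
    show "L (J e) = J (L e)"
    proof (cases "J = id")
      case True then show ?thesis by simp
    next
      case False
      then have c: "complex_structure J" using s ss_cases by blast
      from e consider "e \<in> B" | b where "b \<in> B" "e = J b" by (auto simp: E_def)
      then show ?thesis
      proof cases
        case 1 then show ?thesis using LJb Lb by simp
      next
        case 2 then show ?thesis using cs_JJ[OF c] LJb Lb linear_neg[OF L] by simp
      qed
    qed
  qed
  define X where "X = span E"
  have clX: "closure X = range P" using oB by (simp add: orthonormal_basis_of_def X_def E_def)
  have XP: "P x = x" if "x \<in> X" for x
    using that closure_subset[of X] clX sap_range[OF P] by auto
  have Luc: "uniformly_continuous_on X L"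
    unfolding uniformly_continuous_on_def
  proof (intro allI impI)
    fix e :: real assume "0 < e"
    show "\<exists>d>0. \<forall>x\<in>X. \<forall>x'\<in>X. dist x' x < d \<longrightarrow> dist (L x') (L x) < e"
    proof (intro exI[of _ e] conjI ballI impI)
      fix x x' assume "x \<in> X" "x' \<in> X" "dist x' x < e"
      then have "x' - x \<in> span E" by (simp add: X_def span_diff)
      then show "dist (L x') (L x) < e" using \<open>dist x' x < e\<close> normS
        by (simp add: dist_norm linear_diff[OF L, symmetric])
    qed (fact)
  qed
  obtain G where Guc: "uniformly_continuous_on (closure X) G" and GL: "\<And>x. x \<in> X \<Longrightarrow> L x = G x"
    using uniformly_continuous_on_extension_on_closure[OF Luc] by metis
  define T where "T x = G (P x)" for x
  have Pc: "continuous_on UNIV P" by (rule linear_continuous_on[OF sap_bl[OF P]])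
  have Rc: "continuous_on UNIV R" by (rule linear_continuous_on[OF sap_bl[OF R]])
  have Jc: "continuous_on UNIV J" by (rule linear_continuous_on[OF Jbl])
  have Tc: "continuous_on UNIV T"
    unfolding T_def by (rule continuous_on_compose2[OF uniformly_continuous_imp_continuous[OF Guc] Pc])
       (use clX in auto)
  have TP: "T (P x) = T x" for x by (simp add: T_def sap_idem[OF P])
  have TX: "T x = L x" if "x \<in> X" for x using that XP GL by (simp add: T_def)
  have Pl: "linear P" using sap_bl[OF P] bounded_linear.linear by blast
  have Tadd1: "T (x + y) = T x + T y" if "y \<in> X" for x y
  proof (rule eq_on_range[where X=X and P=P and h="\<lambda>x. T (x + y)" and k="\<lambda>x. T x + T y"])
    show "continuous_on UNIV (\<lambda>x. T (x + y))"
      by (rule continuous_on_compose2[OF Tc]) (auto intro!: continuous_intros)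
    show "continuous_on UNIV (\<lambda>x. T x + T y)" by (auto intro!: continuous_intros Tc)
    show "T (x + y) = T x + T y" if "x \<in> X" for x
      using that \<open>y \<in> X\<close> TX linear_add[OF L] by (simp add: X_def span_add)
    show "closure X = range P" by fact
    show "T (P x + y) = T (x + y)" for x
      using XP[OF \<open>y \<in> X\<close>] unfolding T_def by (simp add: linear_add[OF Pl] sap_idem[OF P])
    show "T (P x) + T y = T x + T y" for x by (simp add: TP)
  qed
  have Tadd: "T (x + y) = T x + T y" for x y
  proof (rule eq_on_range[where X=X and P=P and h="\<lambda>y. T (x + y)" and k="\<lambda>y. T x + T y"])
    show "continuous_on UNIV (\<lambda>y. T (x + y))"
      by (rule continuous_on_compose2[OF Tc]) (auto intro!: continuous_intros)
    show "continuous_on UNIV (\<lambda>y. T x + T y)" by (auto intro!: continuous_intros Tc)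
    show "T (x + y) = T x + T y" if "y \<in> X" for y using Tadd1[OF that] .
    show "closure X = range P" by fact
    show "T (x + P y) = T (x + y)" for y
      using Tadd1[of "P y" x] Tadd1[of "P y" "P x"] TP
      by (metis add.commute clX closure_subset linear_add[OF Pl] sap_idem[OF P] rangeI)
    show "T x + T (P y) = T x + T y" for y by (simp add: TP)
  qed
  have Tscale: "T (c *\<^sub>R x) = c *\<^sub>R T x" for c x
  proof (rule eq_on_range[where X=X and P=P and h="\<lambda>x. T (c *\<^sub>R x)" and k="\<lambda>x. c *\<^sub>R T x"])
    show "continuous_on UNIV (\<lambda>x. T (c *\<^sub>R x))"
      by (rule continuous_on_compose2[OF Tc]) (auto intro!: continuous_intros)
    show "continuous_on UNIV (\<lambda>x. c *\<^sub>R T x)" by (auto intro!: continuous_intros Tc)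
    show "T (c *\<^sub>R x) = c *\<^sub>R T x" if "x \<in> X" for x
      using that TX linear_scale[OF L] by (simp add: X_def span_scale)
    show "closure X = range P" by fact
    show "T (c *\<^sub>R P x) = T (c *\<^sub>R x)" for x
      unfolding T_def by (simp add: linear_scale[OF Pl] sap_idem[OF P])
    show "c *\<^sub>R T (P x) = c *\<^sub>R T x" for x by (simp add: TP)
  qed
  have Tiso1: "inner (T x) (T y) = inner (P x) (P y)" if "y \<in> X" for x y
  proof (rule eq_on_range[where X=X and P=P and h="\<lambda>x. inner (T x) (T y)" and k="\<lambda>x. inner (P x) (P y)"])
    show "continuous_on UNIV (\<lambda>x. inner (T x) (T y))" by (auto intro!: continuous_intros Tc)
    show "continuous_on UNIV (\<lambda>x. inner (P x) (P y))" by (auto intro!: continuous_intros Pc)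
    show "inner (T x) (T y) = inner (P x) (P y)" if "x \<in> X" for x
      using that \<open>y \<in> X\<close> TX XP isoS by (simp add: X_def)
    show "closure X = range P" by fact
    show "inner (T (P x)) (T y) = inner (T x) (T y)" for x by (simp add: TP)
    show "inner (P (P x)) (P y) = inner (P x) (P y)" for x by (simp add: sap_idem[OF P])
  qed
  have Tiso: "inner (T x) (T y) = inner (P x) (P y)" for x y
  proof (rule eq_on_range[where X=X and P=P and h="\<lambda>y. inner (T x) (T y)" and k="\<lambda>y. inner (P x) (P y)"])
    show "continuous_on UNIV (\<lambda>y. inner (T x) (T y))" by (auto intro!: continuous_intros Tc)
    show "continuous_on UNIV (\<lambda>y. inner (P x) (P y))" by (auto intro!: continuous_intros Pc)
    show "inner (T x) (T y) = inner (P x) (P y)" if "y \<in> X" for y using Tiso1[OF that] .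
    show "closure X = range P" by fact
    show "inner (T x) (T (P y)) = inner (T x) (T y)" for y by (simp add: TP)
    show "inner (P x) (P (P y)) = inner (P x) (P y)" for y by (simp add: sap_idem[OF P])
  qed
  have Tbl: "bounded_linear T"
  proof (rule bounded_linear_intro[where K=1])
    show "T (x + y) = T x + T y" for x y by (rule Tadd)
    show "T (r *\<^sub>R x) = r *\<^sub>R T x" for r x by (rule Tscale)
    show "norm (T x) \<le> norm x * 1" for x
      using Tiso[of x x] sap_norm[OF P, of x] by (simp add: norm_eq_sqrt_inner)
  qed
  have Tl: "linear T" using Tbl bounded_linear.linear by blast
  have TJ: "T (J x) = J (T x)" for x
  proof (rule eq_on_range[where X=X and P=P and h="\<lambda>x. T (J x)" and k="\<lambda>x. J (T x)"])
    show "continuous_on UNIV (\<lambda>x. T (J x))" by (rule continuous_on_compose2[OF Tc Jc]) auto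
    show "continuous_on UNIV (\<lambda>x. J (T x))" by (rule continuous_on_compose2[OF Jc Tc]) auto
    show "T (J x) = J (T x)" if "x \<in> X" for x
      using that TX JS LJ by (simp add: X_def)
    show "closure X = range P" by fact
    show "T (J (P x)) = T (J x)" for x by (metis TP sap_J[OF P])
    show "J (T (P x)) = J (T x)" for x by (simp add: TP)
  qed
  have LR: "L x \<in> range R" if "x \<in> X" for x
  proof -
    have "L ` E \<subseteq> range R"
    proof
      fix y assume "y \<in> L ` E"
      then obtain e where e: "e \<in> E" "y = L e" by auto
      from e(1) consider "e \<in> B" | b where "b \<in> B" "e = J b" by (auto simp: E_def)
      then show "y \<in> range R"
      proof cases
        case 1 then show ?thesis using e Lb fB oC by (auto simp: orthonormal_basis_of_def)
      next
        case 2
        then have "f b \<in> range R" using fB oC by (auto simp: orthonormal_basis_of_def)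
        then have "J (f b) = R (J (f b))" using sap_range[OF R] sap_J[OF R] by metis
        then show ?thesis using 2 e LJb by (metis rangeI)
      qed
    qed
    then have "span (L ` E) \<subseteq> range R"
      using sap_subspace[OF R] by (metis span_minimal)
    then show ?thesis using that span_linear_image[OF L, of E] by (auto simp: X_def)
  qed
  have TR: "R (T x) = T x" for x
  proof (rule eq_on_range[where X=X and P=P and h="\<lambda>x. R (T x)" and k="T"])
    show "continuous_on UNIV (\<lambda>x. R (T x))" by (rule continuous_on_compose2[OF Rc Tc]) auto
    show "continuous_on UNIV T" by fact
    show "R (T x) = T x" if "x \<in> X" for x
      using that TX LR sap_range[OF R] by simp
    show "closure X = range P" by fact
    show "R (T (P x)) = R (T x)" for x by (simp add: TP)
    show "T (P x) = T x" for x by (simp add: TP)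
  qed
  have Tb: "T b = f b" if "b \<in> B" for b
    using that TX Lb by (simp add: X_def E_def span_base)
  show ?thesis using Tbl TJ TP TR Tiso Tb by blast
qed



lemma comp_id:
  fixes J :: "'a::{real_inner, complete_space} \<Rightarrow> 'a"
  assumes s: "scalar_structure J" and P: "sa_projection J P"
    and oC: "orthonormal_basis_of J C (range P)"
    and T: "bounded_linear T" and S: "bounded_linear S"
    and TJ: "\<And>x. T (J x) = J (T x)" and SJ: "\<And>x. S (J x) = J (S x)"
    and SC: "\<And>c. c \<in> C \<Longrightarrow> S (T c) = c" and TP: "\<And>x. T (P x) = T x"
  shows "S (T x) = P x"
proof (rule eq_on_range[where X="span (C \<union> J ` C)" and P=P and h="\<lambda>x. S (T x)" and k=P])
  have Tc: "continuous_on UNIV T" by (rule linear_continuous_on[OF T])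
  have Sc: "continuous_on UNIV S" by (rule linear_continuous_on[OF S])
  show "continuous_on UNIV (\<lambda>x. S (T x))" by (rule continuous_on_compose2[OF Sc Tc]) auto
  show "continuous_on UNIV P" by (rule linear_continuous_on[OF sap_bl[OF P]])
  show "closure (span (C \<union> J ` C)) = range P" using oC by (simp add: orthonormal_basis_of_def)
  show "S (T (P x)) = S (T x)" for x by (simp add: TP)
  show "P (P x) = P x" for x by (simp add: sap_idem[OF P])
  fix x assume x: "x \<in> span (C \<union> J ` C)"
  show "S (T x) = P x"
  proof (rule linear_eq_on_span[where B="C \<union> J ` C" and f="\<lambda>x. S (T x)" and g=P])
    show "linear (\<lambda>x. S (T x))"
      using linear_compose[OF bounded_linear.linear[OF T] bounded_linear.linear[OF S]] by (simp add: o_def)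
    show "linear P" using sap_bl[OF P] bounded_linear.linear by blast
    show "x \<in> span (C \<union> J ` C)" by fact
    have CP: "P c = c" if "c \<in> C" for c
      using that oC sap_range[OF P] unfolding orthonormal_basis_of_def by blast
    fix e assume "e \<in> C \<union> J ` C"
    then consider "e \<in> C" | c where "c \<in> C" "e = J c" by blast
    then show "S (T e) = P e"
    proof cases
      case 1 then show ?thesis using SC CP by simp
    next
      case 2 then show ?thesis using SC CP TJ SJ sap_J[OF P] by simp
    qed
  qed
qed

lemma mk_pair:
  fixes J :: "'a::{real_inner, complete_space} \<Rightarrow> 'a"
  assumes s: "scalar_structure J" and P: "sa_projection J P" and R: "sa_projection J R"
    and rk: "same_rank J R P"
  shows "\<exists>T S. bounded_linear T \<and> bounded_linear S \<and> (\<forall>x. T (J x) = J (T x)) \<and> (\<forall>x. S (J x) = J (S x))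
    \<and> (\<forall>x y. inner (T x) y = inner x (S y)) \<and> (\<forall>x. S (T x) = P x) \<and> (\<forall>y. T (S y) = R y)
    \<and> (\<forall>x. T (P x) = T x) \<and> (\<forall>x. R (T x) = T x) \<and> (\<forall>y. S (R y) = S y) \<and> (\<forall>y. P (S y) = S y)"
proof -
  obtain B C h where oB: "orthonormal_basis_of J B (range R)" and oC: "orthonormal_basis_of J C (range P)"
    and h: "bij_betw h B C"
    using rk by (auto simp: same_rank_def eqpoll_def)
  define f where "f = inv_into B h"
  have f: "bij_betw f C B" using h by (simp add: f_def bij_betw_inv_into)
  obtain T where T: "bounded_linear T" "\<And>x. T (J x) = J (T x)" "\<And>x. T (P x) = T x"
     "\<And>x. R (T x) = T x" "\<And>x y. inner (T x) (T y) = inner (P x) (P y)" "\<And>c. c \<in> C \<Longrightarrow> T c = f c"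
    using mk_iso[OF s P R oC oB f] by blast
  obtain S where S: "bounded_linear S" "\<And>x. S (J x) = J (S x)" "\<And>x. S (R x) = S x"
     "\<And>x. P (S x) = S x" "\<And>x y. inner (S x) (S y) = inner (R x) (R y)" "\<And>b. b \<in> B \<Longrightarrow> S b = h b"
    using mk_iso[OF s R P oB oC h] by blast
  have ST: "S (T x) = P x" for x
    by (rule comp_id[OF s P oC T(1) S(1) T(2) S(2) _ T(3)])
       (use T(6) S(6) h in \<open>metis f_def bij_betw_def f_inv_into_f inv_into_into\<close>)
  have TS: "T (S y) = R y" for y
    by (rule comp_id[OF s R oB S(1) T(1) S(2) T(2) _ S(3)])
       (use T(6) S(6) h in \<open>auto simp: f_def bij_betw_def\<close>)
  have adj: "inner (T x) y = inner x (S y)" for x y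
  proof -
    have "inner (T x) y = inner (R (T x)) y" by (simp add: T(4))
    also have "\<dots> = inner (T x) (R y)" by (rule sap_sa[OF R])
    also have "\<dots> = inner (T x) (T (S y))" by (simp add: TS)
    also have "\<dots> = inner (P x) (P (S y))" by (rule T(5))
    also have "\<dots> = inner x (P (P (S y)))" by (rule sap_sa[OF P])
    also have "\<dots> = inner x (S y)" by (simp add: S(4))
    finally show ?thesis .
  qed
  show ?thesis using T S ST TS adj by blast
qed



lemma sum_two:
  fixes A :: "nat set"
  assumes "finite A" "j1 \<in> A" "j2 \<in> A" "j1 \<noteq> j2"
    "\<And>j. j \<in> A \<Longrightarrow> j \<noteq> j1 \<Longrightarrow> j \<noteq> j2 \<Longrightarrow> G' j = G j"
    "G' j1 + G' j2 = (G j1 + G j2 :: real)"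
  shows "sum G' A = sum G A"
proof -
  have r: "sum H A = H j1 + H j2 + sum H (A - {j1} - {j2})" for H :: "nat \<Rightarrow> real"
    using assms(1-4) by (simp add: sum.remove[of A j1] sum.remove[of "A - {j1}" j2] algebra_simps)
  have "sum G' (A - {j1} - {j2}) = sum G (A - {j1} - {j2})"
    using assms(5) by (intro sum.cong) auto
  then show ?thesis using r[of G] r[of G'] assms(6) by simp
qed

definition rowinv :: "nat \<Rightarrow> nat \<Rightarrow> (nat \<Rightarrow> real) \<Rightarrow> (nat \<Rightarrow> nat \<Rightarrow> real) \<Rightarrow> bool" where
  "rowinv n m r F \<longleftrightarrow> (\<forall>a<n. \<forall>b<n. (\<Sum>j<m. F a j * F b j) = (if a = b then r a else 0))"

lemma frame_induct:
  assumes "(\<Sum>a<n. r a) = real m"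
  shows "card {j. j < m \<and> (\<Sum>a<n. F a j ^ 2) \<noteq> 1} = k \<Longrightarrow> rowinv n m r F \<Longrightarrow>
    \<exists>F'. (\<forall>j<m. (\<Sum>a<n. F' a j ^ 2) = 1) \<and> rowinv n m r F'"
proof (induction k arbitrary: F rule: less_induct)
  case (less k F)
  define N where "N j = (\<Sum>a<n. F a j ^ 2)" for j
  define U where "U = {j. j < m \<and> N j \<noteq> 1}"
  have Ufin: "finite U" by (simp add: U_def)
  show ?case
  proof (cases "U = {}")
    case True then show ?thesis using less.prems by (auto simp: U_def N_def)
  next
    case False
    then obtain j0 where j0: "j0 < m" "N j0 \<noteq> 1" by (auto simp: U_def)
    have totN: "(\<Sum>j<m. N j) = real m"
    proof -
      have "(\<Sum>j<m. N j) = (\<Sum>a<n. \<Sum>j<m. F a j * F a j)"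
        unfolding N_def by (subst sum.swap) (simp add: power2_eq_square)
      also have "\<dots> = (\<Sum>a<n. r a)" using less.prems(2) by (simp add: rowinv_def)
      finally show ?thesis using assms by simp
    qed
    obtain j1 where j1: "j1 < m" "N j1 < 1"
    proof (rule ccontr)
      assume "\<not> thesis"
      then have ge: "\<forall>j\<in>{..<m}. 1 \<le> N j" using that by force
      have "(\<Sum>j<m. (1::real)) < (\<Sum>j<m. N j)"
        using ge j0 by (intro sum_strict_mono_ex1) (auto simp: order_le_less)
      then show False using totN by simp
    qed
    obtain j2 where j2: "j2 < m" "N j2 > 1"
    proof (rule ccontr)
      assume "\<not> thesis"
      then have ge: "\<forall>j\<in>{..<m}. N j \<le> 1" using that by force
      have "(\<Sum>j<m. N j) < (\<Sum>j<m. (1::real))"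
        using ge j0 by (intro sum_strict_mono_ex1) (auto simp: order_le_less)
      then show False using totN by simp
    qed
    have j12: "j1 \<noteq> j2" using j1 j2 by auto
    define phi where "phi t = (\<Sum>a<n. (cos t * F a j1 + sin t * F a j2) ^ 2)" for t
    have "\<exists>t. 0 \<le> t \<and> t \<le> pi/2 \<and> phi t = 1"
      by (rule IVT') (use j1 j2 in \<open>auto simp: phi_def N_def intro!: continuous_intros\<close>)
    then obtain t where t: "phi t = 1" by blast
    define F' where "F' a j = (if j = j1 then cos t * F a j1 + sin t * F a j2
       else if j = j2 then - sin t * F a j1 + cos t * F a j2 else F a j)" for a j
    have rot: "(c * x1 + s * x2) * (c * y1 + s * y2) + (c * x2 - s * x1) * (c * y2 - s * y1)
      = x1 * y1 + x2 * y2" if "s^2 + c^2 = 1" for c s x1 x2 y1 y2 :: real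
    proof -
      have "(c * x1 + s * x2) * (c * y1 + s * y2) + (c * x2 - s * x1) * (c * y2 - s * y1)
        = (s^2 + c^2) * (x1 * y1 + x2 * y2)" by (simp add: algebra_simps power2_eq_square)
      then show ?thesis using that by simp
    qed
    have row': "rowinv n m r F'"
      unfolding rowinv_def
    proof (intro allI impI)
      fix a b assume ab: "a < n" "b < n"
      have "(\<Sum>j<m. F' a j * F' b j) = (\<Sum>j<m. F a j * F b j)"
        by (rule sum_two[of "{..<m}" j1 j2]) (use j1 j2 j12 rot[OF sin_cos_squared_add[of t]] in \<open>auto simp: F'_def\<close>)
      then show "(\<Sum>j<m. F' a j * F' b j) = (if a = b then r a else 0)"
        using less.prems(2) ab by (simp add: rowinv_def)
    qed
    define U' where "U' = {j. j < m \<and> (\<Sum>a<n. F' a j ^ 2) \<noteq> 1}"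
    have "U' \<subseteq> U - {j1}"
    proof
      fix x assume x: "x \<in> U'"
      show "x \<in> U - {j1}"
      proof (cases "x = j1 \<or> x = j2")
        case True then show ?thesis using x t j1 j2 j12 by (auto simp: U'_def U_def F'_def N_def phi_def)
      next
        case False
        then have "F' a x = F a x" for a by (simp add: F'_def)
        then show ?thesis using x False by (auto simp: U'_def U_def N_def)
      qed
    qed
    then have "U' \<subset> U" using j1 by (auto simp: U_def)
    then have "card U' < card U" using Ufin by (simp add: psubset_card_mono)
    then have "card U' < k" using less.prems(1) by (simp add: U_def N_def)
    then show ?thesis using less.IH[OF _ refl row'] by (simp add: U'_def)
  qed
qed

lemma frame_exists:
  fixes r :: "nat \<Rightarrow> real"
  assumes "\<And>a. a < n \<Longrightarrow> r a \<ge> 0" "(\<Sum>a<n. r a) = real m" "n \<le> m"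
  shows "\<exists>F::nat\<Rightarrow>nat\<Rightarrow>real. (\<forall>j<m. (\<Sum>a<n. F a j ^ 2) = 1) \<and>
    (\<forall>a<n. \<forall>b<n. (\<Sum>j<m. F a j * F b j) = (if a = b then r a else 0))"
proof -
  define F where "F a j = (if a = j then sqrt (r a) else 0)" for a j
  have "rowinv n m r F"
    unfolding rowinv_def
  proof (intro allI impI)
    fix a b assume ab: "a < n" "b < n"
    have "(\<Sum>j<m. F a j * F b j) = (\<Sum>j\<in>{a}. F a j * F b j)"
      by (rule sum.mono_neutral_right) (use ab assms(3) in \<open>auto simp: F_def\<close>)
    then show "(\<Sum>j<m. F a j * F b j) = (if a = b then r a else 0)"
      using assms(1)[OF ab(1)] by (auto simp: F_def)
  qed
  then show ?thesis using frame_induct[OF assms(2) refl] by (auto simp: rowinv_def)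
qed



lemma one_Q:
  fixes J :: "'a::{real_inner, complete_space} \<Rightarrow> 'a" and P T S :: "nat \<Rightarrow> 'a \<Rightarrow> 'a" and c :: "nat \<Rightarrow> real"
  assumes s: "scalar_structure J"
    and proj: "\<And>i. i < n \<Longrightarrow> sa_projection J (P i)"
    and orth: "\<And>i j x. i < n \<Longrightarrow> j < n \<Longrightarrow> i \<noteq> j \<Longrightarrow> P i (P j x) = 0"
    and n0: "0 < n"
    and Tbl: "\<And>a. a < n \<Longrightarrow> bounded_linear (T a)"
    and Sbl: "\<And>a. a < n \<Longrightarrow> bounded_linear (S a)"
    and TJ: "\<And>a x. a < n \<Longrightarrow> T a (J x) = J (T a x)"
    and SJ: "\<And>a x. a < n \<Longrightarrow> S a (J x) = J (S a x)"
    and adj: "\<And>a x y. a < n \<Longrightarrow> inner (T a x) y = inner x (S a y)"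
    and ST: "\<And>a x. a < n \<Longrightarrow> S a (T a x) = P 0 x"
    and TP: "\<And>a x. a < n \<Longrightarrow> T a (P 0 x) = T a x"
    and PT: "\<And>a x. a < n \<Longrightarrow> P a (T a x) = T a x"
    and SP: "\<And>a x. a < n \<Longrightarrow> S a (P a x) = S a x"
    and B0: "orthonormal_basis_of J B0 (range (P 0))"
    and c: "(\<Sum>a<n. c a ^ 2) = 1"
  shows "sa_projection J (\<lambda>x. (\<Sum>a<n. c a *\<^sub>R T a (\<Sum>b<n. c b *\<^sub>R S b x)))
    \<and> same_rank J (\<lambda>x. (\<Sum>a<n. c a *\<^sub>R T a (\<Sum>b<n. c b *\<^sub>R S b x))) (P 0)"
proof -
  define V where "V x = (\<Sum>a<n. c a *\<^sub>R T a x)" for x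
  define W where "W y = (\<Sum>b<n. c b *\<^sub>R S b y)" for y
  define Q where "Q x = V (W x)" for x
  have Q_eq: "(\<lambda>x. (\<Sum>a<n. c a *\<^sub>R T a (\<Sum>b<n. c b *\<^sub>R S b x))) = Q"
    by (simp add: Q_def V_def W_def fun_eq_iff)
  have P0: "sa_projection J (P 0)" using proj n0 by blast
  have Jbl: "bounded_linear J" by (rule ss_bl[OF s])
  have Vbl: "bounded_linear V" unfolding V_def
    by (intro bounded_linear_sum bounded_linear_compose[OF bounded_linear_scaleR_right] Tbl) auto
  have Wbl: "bounded_linear W" unfolding W_def
    by (intro bounded_linear_sum bounded_linear_compose[OF bounded_linear_scaleR_right] Sbl) auto
  have Qbl: "bounded_linear Q" unfolding Q_def by (rule bounded_linear_compose[OF Vbl Wbl])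
  have Sl: "linear (S a)" if "a < n" for a using Sbl[OF that] bounded_linear.linear by blast
  have Tl: "linear (T a)" if "a < n" for a using Tbl[OF that] bounded_linear.linear by blast
  have Jl: "linear J" using Jbl bounded_linear.linear by blast
  have STab: "S b (T a x) = (if a = b then P 0 x else 0)" if "a < n" "b < n" for a b x
  proof (cases "a = b")
    case True then show ?thesis using ST that by simp
  next
    case False
    have "S b (T a x) = S b (P b (P a (T a x)))" using SP[OF that(2)] PT[OF that(1)] by simp
    also have "\<dots> = 0" using orth[OF that(2,1)] False linear_0[OF Sl[OF that(2)]] by simp
    finally show ?thesis using False by simp
  qed
  have WV: "W (V x) = P 0 x" for x
  proof -
    have "W (V x) = (\<Sum>b<n. c b *\<^sub>R (\<Sum>a<n. c a *\<^sub>R S b (T a x)))"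
      unfolding W_def V_def
      by (intro sum.cong refl) (simp add: linear_sum[OF Sl] linear_scale[OF Sl])
    also have "\<dots> = (\<Sum>b<n. c b *\<^sub>R (c b *\<^sub>R P 0 x))"
    proof (intro sum.cong refl arg_cong[where f="\<lambda>v. _ *\<^sub>R v"])
      fix b assume b: "b \<in> {..<n}"
      have "(\<Sum>a<n. c a *\<^sub>R S b (T a x)) = (\<Sum>a\<in>{b}. c a *\<^sub>R S b (T a x))"
        by (rule sum.mono_neutral_right) (use b STab in auto)
      then show "(\<Sum>a<n. c a *\<^sub>R S b (T a x)) = c b *\<^sub>R P 0 x" using STab b by simp
    qed
    also have "\<dots> = (\<Sum>b<n. c b ^ 2) *\<^sub>R P 0 x" by (simp add: scaleR_sum_left power2_eq_square)
    finally show ?thesis using c by simp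
  qed
  have VP: "V (P 0 x) = V x" for x by (simp add: V_def TP)
  have VW_adj: "inner (V x) y = inner x (W y)" for x y
    by (simp add: V_def W_def inner_sum_left inner_sum_right adj)
  have VJ: "V (J x) = J (V x)" for x
    by (simp add: V_def TJ linear_sum[OF Jl] linear_scale[OF Jl])
  have WJ: "W (J x) = J (W x)" for x
    by (simp add: W_def SJ linear_sum[OF Jl] linear_scale[OF Jl])
  have QV: "Q (V x) = V x" for x by (simp add: Q_def WV VP)
  have saQ: "sa_projection J Q"
    unfolding sa_projection_def
  proof (intro conjI allI)
    show "bounded_linear Q" by fact
    show "Q (Q x) = Q x" for x using QV by (simp add: Q_def)
    show "inner (Q x) y = inner x (Q y)" for x y
      by (simp add: Q_def VW_adj) (metis VW_adj inner_commute)
    show "Q (J x) = J (Q x)" for x by (simp add: Q_def WJ VJ)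
  qed
  have iso: "inner (V x) (V y) = inner x (P 0 y)" for x y by (simp add: VW_adj WV)
  have B0P: "P 0 b = b" if "b \<in> B0" for b
    using that B0 sap_range[OF P0] unfolding orthonormal_basis_of_def by blast
  have rQ: "range Q = V ` range (P 0)"
  proof
    show "range Q \<subseteq> V ` range (P 0)" by (auto simp: Q_def) (metis VP rangeI image_eqI)
    show "V ` range (P 0) \<subseteq> range Q" by (auto) (metis QV rangeI)
  qed
  define E0 where "E0 = B0 \<union> J ` B0"
  have onb: "orthonormal_basis_of J (V ` B0) (range Q)"
    unfolding orthonormal_basis_of_def
  proof (intro conjI ballI impI)
    show "V ` B0 \<subseteq> range Q" by (auto) (metis QV rangeI)
    fix x assume "x \<in> V ` B0"
    then obtain b where b: "b \<in> B0" "x = V b" by auto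
    have "inner (V b) (V b) = 1" using iso B0P[OF b(1)] onb_inner[OF B0 b(1) b(1)] by simp
    then show "norm x = 1" using b by (simp add: norm_eq_1)
    fix y assume "y \<in> V ` B0" "x \<noteq> y"
    then obtain b' where b': "b' \<in> B0" "y = V b'" and bb: "b \<noteq> b'" using b by auto
    show "inner x y = 0" using iso B0P[OF b'(1)] onb_inner[OF B0 b(1) b'(1)] b b' bb by simp
    have "inner x (J y) = inner b (P 0 (J b'))" using b b' iso VJ by metis
    also have "\<dots> = inner b (J b')" using B0P[OF b'(1)] sap_J[OF P0] by simp
    also have "\<dots> = 0" using B0 b(1) b'(1) bb by (auto simp: orthonormal_basis_of_def)
    finally show "inner x (J y) = 0" .
  next
    have "V ` B0 \<union> J ` V ` B0 = V ` E0" unfolding E0_def image_Un image_image VJ[symmetric] ..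
    then have sp: "span (V ` B0 \<union> J ` V ` B0) = V ` span E0"
      by (simp add: span_linear_image[OF bounded_linear.linear[OF Vbl]])
    have clE: "closure (span E0) = range (P 0)" using B0 by (simp add: orthonormal_basis_of_def E0_def)
    show "closure (span (V ` B0 \<union> J ` V ` B0)) = range Q"
    proof
      show "closure (span (V ` B0 \<union> J ` V ` B0)) \<subseteq> range Q"
        unfolding sp by (rule closure_minimal) (auto simp: sap_range_closed[OF saQ], metis QV rangeI)
      have "range Q = V ` closure (span E0)" using rQ clE by simp
      also have "\<dots> \<subseteq> closure (V ` span E0)" by (rule closure_bounded_linear_image_subset[OF Vbl])
      finally show "range Q \<subseteq> closure (span (V ` B0 \<union> J ` V ` B0))" by (simp add: sp)
    qed
  qed
  have inj: "inj_on V B0"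
  proof (rule inj_onI)
    fix b b' assume bb: "b \<in> B0" "b' \<in> B0" "V b = V b'"
    have "inner (V b) (V b') = inner b b'" using iso B0P[OF bb(2)] by simp
    moreover have "inner (V b) (V b') = 1" using iso B0P[OF bb(1)] onb_inner[OF B0 bb(1) bb(1)] bb(3) by metis
    ultimately show "b = b'" using onb_inner[OF B0 bb(1,2)] by (auto split: if_splits)
  qed
  have "same_rank J Q (P 0)"
    unfolding same_rank_def using onb B0 inj_on_image_eqpoll_self[OF inj] by blast
  then show ?thesis using saQ Q_eq by simp
qed



theorem lemma7:
  fixes J :: "'a::{real_inner, complete_space} \<Rightarrow> 'a"
    and P :: "nat \<Rightarrow> 'a \<Rightarrow> 'a"
    and rr :: "nat \<Rightarrow> real"
    and n m :: nat
  assumes field: "scalar_structure J"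
    and proj: "\<And>i. i < n \<Longrightarrow> sa_projection J (P i)"
    and orth: "\<And>i j x. i < n \<Longrightarrow> j < n \<Longrightarrow> i \<noteq> j \<Longrightarrow> P i (P j x) = 0"
    and nonzero: "\<And>i. i < n \<Longrightarrow> range (P i) \<noteq> {0}"
    and rank: "\<And>i. i < n \<Longrightarrow> same_rank J (P i) (P 0)"
    and nonneg: "\<And>i. i < n \<Longrightarrow> rr i \<ge> 0"
    and rsum: "(\<Sum>i<n. rr i) = real m"
    and mn: "m \<ge> n"
  shows "\<exists>Q :: nat \<Rightarrow> 'a \<Rightarrow> 'a.
           (\<forall>j<m. sa_projection J (Q j) \<and> same_rank J (Q j) (P 0))
           \<and> (\<forall>x. (\<Sum>i<n. rr i *\<^sub>R P i x) = (\<Sum>j<m. Q j x))"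
proof (cases "n = 0")
  case True
  then have "m = 0" using rsum by simp
  then show ?thesis using True by simp
next
  case False
  then have n0: "0 < n" by simp
  have P0: "sa_projection J (P 0)" using proj n0 by blast
  define good where "good a T S \<longleftrightarrow> bounded_linear T \<and> bounded_linear S \<and> (\<forall>x. T (J x) = J (T x)) \<and> (\<forall>x. S (J x) = J (S x))
    \<and> (\<forall>x y. inner (T x) y = inner x (S y)) \<and> (\<forall>x. S (T x) = P 0 x) \<and> (\<forall>y. T (S y) = P a y)
    \<and> (\<forall>x. T (P 0 x) = T x) \<and> (\<forall>x. P a (T x) = T x) \<and> (\<forall>y. S (P a y) = S y) \<and> (\<forall>y. P 0 (S y) = S y)"
    for a and T S :: "'a \<Rightarrow> 'a"
  have "\<forall>a\<in>{..<n}. \<exists>T S. good a T S"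
    using mk_pair[OF field P0 proj rank] unfolding good_def by blast
  then have "\<forall>a\<in>{..<n}. \<exists>TS. good a (fst TS) (snd TS)" by simp
  then obtain TS where TS: "\<And>a. a < n \<Longrightarrow> good a (fst (TS a)) (snd (TS a))"
    using bchoice[of "{..<n}"] by (metis lessThan_iff)
  define T where "T a = fst (TS a)" for a
  define S where "S a = snd (TS a)" for a
  have g: "good a (T a) (S a)" if "a < n" for a using TS[OF that] by (simp add: T_def S_def)
  obtain B0 C0 where B0: "orthonormal_basis_of J B0 (range (P 0))"
    using rank[OF n0] unfolding same_rank_def by blast
  obtain F where Fc: "\<And>j. j < m \<Longrightarrow> (\<Sum>a<n. F a j ^ 2) = 1"
    and Fr: "\<And>a b. a < n \<Longrightarrow> b < n \<Longrightarrow> (\<Sum>j<m. F a j * F b j) = (if a = b then rr a else 0)"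
    using frame_exists[OF nonneg rsum mn] by blast
  define Q where "Q j x = (\<Sum>a<n. F a j *\<^sub>R T a (\<Sum>b<n. F b j *\<^sub>R S b x))" for j x
  have Qok: "sa_projection J (Q j) \<and> same_rank J (Q j) (P 0)" if "j < m" for j
    unfolding Q_def
    by (rule one_Q[where T=T and S=S and c="\<lambda>a. F a j" and ?B0.0=B0])
       (use field proj orth n0 B0 Fc[OF that] g in \<open>auto simp: good_def\<close>)
  have sumQ: "(\<Sum>i<n. rr i *\<^sub>R P i x) = (\<Sum>j<m. Q j x)" for x
  proof -
    have Tl: "linear (T a)" if "a < n" for a using g[OF that] bounded_linear.linear by (auto simp: good_def)
    have "(\<Sum>j<m. Q j x) = (\<Sum>j<m. \<Sum>a<n. \<Sum>b<n. (F a j * F b j) *\<^sub>R T a (S b x))"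
      unfolding Q_def
      by (intro sum.cong refl) (simp add: linear_sum[OF Tl] linear_scale[OF Tl] scaleR_sum_right)
    also have "\<dots> = (\<Sum>a<n. \<Sum>b<n. (\<Sum>j<m. F a j * F b j) *\<^sub>R T a (S b x))"
      by (simp add: sum.swap[of _ "{..<m}"] scaleR_sum_left)
    also have "\<dots> = (\<Sum>a<n. rr a *\<^sub>R T a (S a x))"
    proof (intro sum.cong refl)
      fix a assume a: "a \<in> {..<n}"
      have "(\<Sum>b<n. (\<Sum>j<m. F a j * F b j) *\<^sub>R T a (S b x)) = (\<Sum>b\<in>{a}. (\<Sum>j<m. F a j * F b j) *\<^sub>R T a (S b x))"
        by (rule sum.mono_neutral_right) (use a Fr in auto)
      then show "(\<Sum>b<n. (\<Sum>j<m. F a j * F b j) *\<^sub>R T a (S b x)) = rr a *\<^sub>R T a (S a x)"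
        using a Fr by simp
    qed
    also have "\<dots> = (\<Sum>a<n. rr a *\<^sub>R P a x)"
      using g by (intro sum.cong refl) (simp add: good_def)
    finally show ?thesis by simp
  qed
  show ?thesis using Qok sumQ by blast
qed


end
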